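(* Let $K\subseteq\mathbb{R}^n$ be a proper cone and let $A\in\mathbb{R}^{n\times n}$ be $K$-monotone. Let $A=U-V$ be a $K$-regular splitting. Let $U=F-G$ be a $K$-weak regular splitting of type I and $U=\overline{F}-\overline{G}$ a $K$-weak regular splitting of type II of $U$ such that $V\overline{F}^{-1}\overline{G}=\overline{G}\,\overline{F}^{-1}V$. For a positive integer $s$ let $$T_{s}=(F^{-1}G)^{s}+\sum_{j=0}^{s-1}(F^{-1}G)^{j}F^{-1}V,\qquad \overline{T}_{s}=(\overline{F}^{-1}\overline{G})^{s}+\sum_{j=0}^{s-1}(\overline{F}^{-1}\overline{G})^{j}\overline{F}^{-1}V.$$ If $F^{-1}\geq_K\overline{F}^{-1}$ and $F^{-1}G\geq_K\overline{F}^{-1}\overline{G}$, then $\rho(T_s)\leq\rho(\overline{T}_s)<1$.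
   Context: A proper cone $K\subseteq\mathbb{R}^n$ is a closed, convex, pointed, solid cone. For $M\in\mathbb{R}^{n\times n}$, $M\geq_K 0$ means $MK\subseteq K$, and $M\geq_K N$ means $M-N\geq_K0$. A matrix $A$ is $K$-monotone if $A$ is nonsingular and $A^{-1}\geq_K 0$. A splitting $A=U-V$ (with $U$ nonsingular) is $K$-regular if $U^{-1}\geq_K 0$ and $V\geq_K 0$; it is a $K$-weak regular splitting of type I if $U^{-1}\geq_K 0$ and $U^{-1}V\geq_K 0$, and of type II if $U^{-1}\geq_K 0$ and $VU^{-1}\geq_K 0$. $\rho$ denotes spectral radius. *)

theory Defs
  imports "HOL-Analysis.Analysis"
begin

definition proper_cone :: "(real ^ 'n) set \<Rightarrow> bool" where
  "proper_cone K \<longleftrightarrow> cone K \<and> convex K \<and> closed K \<and>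
     K \<inter> uminus ` K = {0} \<and> interior K \<noteq> {}"

definition K_nonneg :: "(real ^ 'n) set \<Rightarrow> real ^ 'n ^ 'n \<Rightarrow> bool" where
  "K_nonneg K M \<longleftrightarrow> (\<forall>x\<in>K. M *v x \<in> K)"

definition K_ge :: "(real ^ 'n) set \<Rightarrow> real ^ 'n ^ 'n \<Rightarrow> real ^ 'n ^ 'n \<Rightarrow> bool" where
  "K_ge K M N \<longleftrightarrow> K_nonneg K (M - N)"

definition K_monotone :: "(real ^ 'n) set \<Rightarrow> real ^ 'n ^ 'n \<Rightarrow> bool" where
  "K_monotone K A \<longleftrightarrow> invertible A \<and> K_nonneg K (matrix_inv A)"

definition K_regular_splitting ::
  "(real ^ 'n) set \<Rightarrow> real ^ 'n ^ 'n \<Rightarrow> real ^ 'n ^ 'n \<Rightarrow> real ^ 'n ^ 'n \<Rightarrow> bool" where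
  "K_regular_splitting K A U V \<longleftrightarrow> A = U - V \<and> invertible U \<and>
     K_nonneg K (matrix_inv U) \<and> K_nonneg K V"

definition K_weak_regular_I ::
  "(real ^ 'n) set \<Rightarrow> real ^ 'n ^ 'n \<Rightarrow> real ^ 'n ^ 'n \<Rightarrow> real ^ 'n ^ 'n \<Rightarrow> bool" where
  "K_weak_regular_I K A U V \<longleftrightarrow> A = U - V \<and> invertible U \<and>
     K_nonneg K (matrix_inv U) \<and> K_nonneg K (matrix_inv U ** V)"

definition K_weak_regular_II ::
  "(real ^ 'n) set \<Rightarrow> real ^ 'n ^ 'n \<Rightarrow> real ^ 'n ^ 'n \<Rightarrow> real ^ 'n ^ 'n \<Rightarrow> bool" where
  "K_weak_regular_II K A U V \<longleftrightarrow> A = U - V \<and> invertible U \<and>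
     K_nonneg K (matrix_inv U) \<and> K_nonneg K (V ** matrix_inv U)"

primrec mat_pow :: "real ^ 'n ^ 'n \<Rightarrow> nat \<Rightarrow> real ^ 'n ^ 'n" where
  "mat_pow M 0 = mat 1"
| "mat_pow M (Suc k) = M ** mat_pow M k"

definition spectral_radius :: "real ^ 'n ^ 'n \<Rightarrow> real" where
  "spectral_radius A = Max {norm z | z :: complex.
      det (mat z - (\<chi> i j. complex_of_real (A $ i $ j))) = 0}"

end

theory Submission
  imports Defs "HOL-Computational_Algebra.Fundamental_Theorem_Algebra"
begin

lemma charpoly_exists:
  fixes M :: "complex^'n^'n"
  shows "\<exists>P. (\<forall>z. poly P z = det (mat z - M)) \<and> coeff P CARD('n) = 1"
proof -
  define q where "q p = (\<Prod>i\<in>UNIV. [: - M$i$(p i), if p i = i then 1 else 0 :])" for p :: "'n \<Rightarrow> 'n"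
  define P where "P = (\<Sum>p\<in>{p. p permutes (UNIV::'n set)}. smult (of_int (sign p)) (q p))"
  have ev: "poly P z = det (mat z - M)" for z
    unfolding P_def q_def det_def
    apply (simp add: poly_sum poly_prod mat_def algebra_simps)
    apply (rule sum.cong[OF refl])
    apply (rule arg_cong[where f="\<lambda>x. _ * x"])
    apply (rule prod.cong[OF refl])
    by auto
  have cid: "coeff (q id) CARD('n) = 1"
  proof -
    have qid: "q id = (\<Prod>i\<in>UNIV. [: - M$i$i, 1 :])" by (simp add: q_def)
    have d: "degree (q id) = CARD('n)"
      unfolding qid by (subst degree_prod_eq_sum_degree) auto
    have l: "lead_coeff (q id) = 1"
      unfolding qid lead_coeff_prod by simp
    show ?thesis using d l by simp
  qed
  have cother: "coeff (q p) CARD('n) = 0" if "p permutes UNIV" "p \<noteq> id" for p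
  proof -
    obtain i0 where i0: "p i0 \<noteq> i0" using \<open>p \<noteq> id\<close> by (auto simp: fun_eq_iff)
    have "degree (q p) \<le> (\<Sum>i\<in>UNIV. degree [: - M$i$(p i), if p i = i then 1 else 0 :])"
      unfolding q_def by (rule order.trans[OF degree_prod_sum_le]) (simp_all add: o_def)
    also have "\<dots> = degree [: - M$i0$(p i0), if p i0 = i0 then 1 else 0 :] +
        (\<Sum>i\<in>UNIV - {i0}. degree [: - M$i$(p i), if p i = i then 1 else 0 :])"
      by (simp add: sum.remove)
    also have "\<dots> \<le> 0 + (\<Sum>i\<in>UNIV - {i0}. 1)"
      using i0 by (intro add_mono sum_mono) auto
    also have "\<dots> < CARD('n)"
      by (simp add: card_Diff_singleton)
    finally show ?thesis by (simp add: coeff_eq_0)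
  qed
  have "coeff P CARD('n) = (\<Sum>p\<in>{p. p permutes (UNIV::'n set)}. of_int (sign p) * coeff (q p) CARD('n))"
    unfolding P_def coeff_sum by simp
  also have "\<dots> = of_int (sign (id::'n\<Rightarrow>'n)) * coeff (q id) CARD('n) +
      (\<Sum>p\<in>{p. p permutes (UNIV::'n set)} - {id}. of_int (sign p) * coeff (q p) CARD('n))"
    by (subst sum.remove[of _ id]) (auto simp: permutes_id finite_permutations)
  also have "\<dots> = 1"
    using cother by (simp add: cid sign_id)
  finally show ?thesis using ev by blast
qed

lemma eig_finite_nonempty:
  fixes M :: "complex^'n^'n"
  shows "finite {z. det (mat z - M) = 0} \<and> {z. det (mat z - M) = 0} \<noteq> {}"
proof -
  obtain P where P: "\<And>z. poly P z = det (mat z - M)" "coeff P CARD('n) = 1"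
    using charpoly_exists by blast
  have "P \<noteq> 0" using P(2) by auto
  then have "finite {z. poly P z = 0}" by (rule poly_roots_finite)
  moreover have "\<exists>z. poly P z = 0"
  proof (rule fundamental_theorem_of_algebra_alt, safe)
    fix a l assume "a \<noteq> 0" "P = pCons a 0"
    then show False using P(2) by (cases "CARD('n)") auto
  qed
  ultimately show ?thesis using P(1) by auto
qed


lemma minv:
  assumes "invertible (M::real^'n^'n)"
  shows "M ** matrix_inv M = mat 1" "matrix_inv M ** M = mat 1"
  using someI_ex[OF assms[unfolded invertible_def]] unfolding matrix_inv_def by auto

lemma mat_pow_Suc': "mat_pow M (Suc k) = mat_pow M k ** M"
proof (induction k)
  case 0 then show ?case by simp
next
  case (Suc k)
  have "mat_pow M (Suc (Suc k)) = M ** (mat_pow M k ** M)" using Suc by simp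
  also have "\<dots> = mat_pow M (Suc k) ** M" by (simp add: matrix_mul_assoc)
  finally show ?case .
qed

lemma sum_mv: "(sum f S) *v (x::real^'n) = (\<Sum>i\<in>S. f i *v x)"
  by (induction S rule: infinite_finite_induct) (auto simp: matrix_vector_mult_add_rdistrib)

lemma mat_pow_mv_Suc: "mat_pow M (Suc k) *v x = mat_pow M k *v (M *v x)"
  by (simp only: mat_pow_Suc' matrix_vector_mul_assoc)

context
  fixes K :: "(real^'n) set"
  assumes PK: "proper_cone K"
begin

lemma K_add: "x \<in> K \<Longrightarrow> y \<in> K \<Longrightarrow> x + y \<in> K"
proof -
  assume "x \<in> K" "y \<in> K"
  then have "(1/2) *\<^sub>R x + (1/2) *\<^sub>R y \<in> K"
    using PK unfolding proper_cone_def convex_def by auto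
  then have "2 *\<^sub>R ((1/2) *\<^sub>R x + (1/2) *\<^sub>R y) \<in> K"
    using PK unfolding proper_cone_def cone_def by auto
  then show ?thesis by (simp add: scaleR_add_right)
qed

lemma K_scale: "x \<in> K \<Longrightarrow> c \<ge> 0 \<Longrightarrow> c *\<^sub>R x \<in> K"
  using PK unfolding proper_cone_def cone_def by auto

lemma K_ne: "K \<noteq> {}"
  using PK unfolding proper_cone_def by auto

lemma K_zero: "0 \<in> K"
  using K_ne K_scale[of _ 0] by auto

lemma K_pointed: "x \<in> K \<Longrightarrow> - x \<in> K \<Longrightarrow> x = 0"
proof -
  assume "x \<in> K" "- x \<in> K"
  then have "x \<in> K \<inter> uminus ` K" by (auto intro: image_eqI[of _ _ "-x"])
  then show ?thesis using PK unfolding proper_cone_def by auto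
qed

lemma K_sum: "(\<And>i. i \<in> S \<Longrightarrow> g i \<in> K) \<Longrightarrow> sum g S \<in> K"
proof (induction S rule: infinite_finite_induct)
  case (infinite A) then show ?case using K_zero by simp
next
  case empty then show ?case using K_zero by simp
next
  case (insert x F) then show ?case using K_add by simp
qed

lemma Kn_mult: "K_nonneg K A \<Longrightarrow> K_nonneg K B \<Longrightarrow> K_nonneg K (A ** B)"
  unfolding K_nonneg_def by (simp add: matrix_vector_mul_assoc[symmetric])

lemma Kn_pow: "K_nonneg K A \<Longrightarrow> K_nonneg K (mat_pow A k)"
  by (induction k) (auto simp: K_nonneg_def matrix_vector_mul_assoc[symmetric])

lemma Kn_ap: "K_nonneg K A \<Longrightarrow> x \<in> K \<Longrightarrow> A *v x \<in> K"
  unfolding K_nonneg_def by auto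

lemma K_ball: "\<exists>c e. e > 0 \<and> ball c e \<subseteq> K"
proof -
  obtain c where "c \<in> interior K" using PK unfolding proper_cone_def by auto
  then show ?thesis by (auto simp: mem_interior)
qed

lemma absorb:
  assumes "e > 0" "ball c e \<subseteq> K"
  shows "\<exists>t>0. c + t *\<^sub>R y \<in> K \<and> c - t *\<^sub>R y \<in> K"
proof -
  define t where "t = e / (2 * norm y + 1)"
  have d: "2 * norm y + 1 > 0" using norm_ge_zero[of y] by linarith
  then have t: "t > 0" using assms by (simp add: t_def)
  have "norm (t *\<^sub>R y) = e * norm y / (2 * norm y + 1)" using assms by (simp add: t_def)
  also have "\<dots> < e"
  proof -
    have "e * norm y < e * (2 * norm y + 1)" using assms norm_ge_zero[of y]
      by (intro mult_strict_left_mono) (auto intro: add_nonneg_pos)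
    then show ?thesis using d by (simp add: divide_less_eq)
  qed
  finally have n: "norm (t *\<^sub>R y) < e" .
  have "c + t *\<^sub>R y \<in> ball c e" "c - t *\<^sub>R y \<in> ball c e"
    using n by (auto simp: dist_norm)
  then show ?thesis using t assms by blast
qed

lemma pos_functional: "\<exists>w \<delta>. \<delta> > 0 \<and> (\<forall>x\<in>K. \<delta> * norm x \<le> inner w x)"
proof -
  define C where "C = convex hull (K \<inter> sphere 0 1)"
  have cK: "closed K" using PK unfolding proper_cone_def by auto
  have "compact (K \<inter> sphere 0 1)" using cK by (intro closed_Int_compact) auto
  then have cC: "compact C" unfolding C_def by (rule compact_convex_hull)
  have n0: "0 \<notin> C"
  proof
    assume "0 \<in> C"
    then obtain S u where S: "finite S" "S \<subseteq> K \<inter> sphere 0 1" "\<forall>x\<in>S. 0 \<le> u x" "sum u S = 1"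
      "(\<Sum>v\<in>S. u v *\<^sub>R v) = 0"
      unfolding C_def convex_hull_explicit by blast
    obtain v0 where v0: "v0 \<in> S" "u v0 > 0"
    proof (rule ccontr)
      assume "\<not> thesis"
      then have "\<forall>v\<in>S. u v = 0" using S(3) that by force
      then show False using S(4) by simp
    qed
    define r where "r = (\<Sum>v\<in>S - {v0}. u v *\<^sub>R v)"
    have rK: "r \<in> K" unfolding r_def using S(2,3) by (intro K_sum K_scale) auto
    have "u v0 *\<^sub>R v0 + r = 0" using S(1,5) v0(1) unfolding r_def by (simp add: sum.remove)
    then have e: "u v0 *\<^sub>R v0 = - r" by (simp add: eq_neg_iff_add_eq_0)
    have "u v0 *\<^sub>R v0 \<in> K" using S(2) v0 by (intro K_scale) auto
    moreover have "- (u v0 *\<^sub>R v0) \<in> K" using e rK by simp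
    ultimately have "u v0 *\<^sub>R v0 = 0" by (rule K_pointed)
    then have "v0 = 0" using v0 by simp
    then show False using S(2) v0 by auto
  qed
  obtain a b where ab: "a \<noteq> 0" "0 < b" "\<forall>x\<in>C. inner a x > b"
    using separating_hyperplane_closed_0[OF convex_convex_hull[of "K \<inter> sphere 0 1"]
      compact_imp_closed[OF cC[unfolded C_def]]] n0 unfolding C_def by blast
  have "b * norm x \<le> inner a x" if x: "x \<in> K" for x
  proof (cases "x = 0")
    case True then show ?thesis by simp
  next
    case False
    have "(1 / norm x) *\<^sub>R x \<in> K \<inter> sphere 0 1" using False x by (auto intro: K_scale)
    then have "(1 / norm x) *\<^sub>R x \<in> C" unfolding C_def by (rule hull_inc)
    then have "inner a ((1 / norm x) *\<^sub>R x) > b" using ab by auto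
    then have "inner a x / norm x > b" by simp
    then show ?thesis using False by (simp add: field_simps)
  qed
  then show ?thesis using ab(2) by blast
qed

end


lemma conv_zero:
  fixes K :: "(real^'n) set" and T :: "real^'n^'n"
  assumes PK: "proper_cone K" and TK: "K_nonneg K T"
    and zabs: "\<And>y. \<exists>r. r *\<^sub>R z + y \<in> K \<and> r *\<^sub>R z - y \<in> K"
    and zK: "z \<in> K"
    and wb: "\<And>m. w - (\<Sum>k<m. mat_pow T k *v z) \<in> K"
  shows "(\<lambda>k. mat_pow T k *v a) \<longlonglongrightarrow> 0"
proof -
  obtain f \<delta> where f: "\<delta> > 0" "\<And>x. x \<in> K \<Longrightarrow> \<delta> * norm x \<le> inner f x"
    using pos_functional[OF PK] by blast
  have TkK: "mat_pow T k *v x \<in> K" if "x \<in> K" for k x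
    using Kn_ap[OF PK Kn_pow[OF PK TK] that] .
  define g where "g k = inner f (mat_pow T k *v z)" for k
  have g0: "0 \<le> g k" for k
  proof -
    have "0 \<le> \<delta> * norm (mat_pow T k *v z)" using f(1) by simp
    also have "\<dots> \<le> g k" unfolding g_def by (rule f(2)[OF TkK[OF zK]])
    finally show ?thesis .
  qed
  have gs: "(\<Sum>k<m. g k) \<le> inner f w" for m
  proof -
    have "0 \<le> \<delta> * norm (w - (\<Sum>k<m. mat_pow T k *v z))" using f(1) by simp
    also have "\<dots> \<le> inner f (w - (\<Sum>k<m. mat_pow T k *v z))" by (rule f(2)[OF wb])
    finally show ?thesis unfolding g_def by (simp add: inner_diff_right inner_sum_right)
  qed
  have "summable g" by (rule summableI_nonneg_bounded[OF g0 gs])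
  then have gl: "g \<longlonglongrightarrow> 0" by (rule summable_LIMSEQ_zero)
  obtain r where r: "r *\<^sub>R z + a \<in> K" "r *\<^sub>R z - a \<in> K" using zabs by blast
  define p where "p = r *\<^sub>R z + a"
  define q where "q = r *\<^sub>R z - a"
  have pq: "p + q = (2 * r) *\<^sub>R z"
  proof -
    have "p + q = r *\<^sub>R z + r *\<^sub>R z" unfolding p_def q_def by simp
    then show ?thesis by (metis mult_2 scaleR_add_left)
  qed
  have bp: "norm (mat_pow T k *v p) \<le> (2 * r / \<delta>) * g k" for k
  proof -
    have "\<delta> * norm (mat_pow T k *v p) \<le> inner f (mat_pow T k *v p)"
      using f(2) TkK r unfolding p_def by blast
    also have "\<dots> \<le> inner f (mat_pow T k *v p) + inner f (mat_pow T k *v q)"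
      using f(2)[OF TkK[of q k]] r f(1) unfolding q_def
      by (smt (verit) mult_nonneg_nonneg norm_ge_zero)
    also have "\<dots> = inner f (mat_pow T k *v (p + q))"
      by (simp add: matrix_vector_right_distrib inner_add_right)
    also have "\<dots> = 2 * r * g k"
      unfolding pq g_def by (simp add: matrix_vector_mult_scaleR)
    finally show ?thesis using f(1) by (simp add: field_simps)
  qed
  have bz: "norm (mat_pow T k *v z) \<le> (1 / \<delta>) * g k" for k
    using f(2)[OF TkK[OF zK, of k]] f(1) unfolding g_def by (simp add: field_simps)
  have l1: "(\<lambda>k. mat_pow T k *v p) \<longlonglongrightarrow> 0"
    by (rule Lim_null_comparison[OF always_eventually[OF allI[OF bp]]])
       (intro tendsto_mult_right_zero gl)
  have l2: "(\<lambda>k. mat_pow T k *v z) \<longlonglongrightarrow> 0"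
    by (rule Lim_null_comparison[OF always_eventually[OF allI[OF bz]]])
       (intro tendsto_mult_right_zero gl)
  have e: "mat_pow T k *v a = mat_pow T k *v p - r *\<^sub>R (mat_pow T k *v z)" for k
    unfolding p_def by (simp add: algebra_simps)
  show ?thesis unfolding e using tendsto_diff[OF l1 tendsto_scaleR[OF tendsto_const l2, of r]] by simp
qed

lemma mat_z_mv: "mat z *v x = z *s (x::complex^'n)"
  by (simp add: vec_eq_iff matrix_vector_mult_def mat_def if_distrib if_distribR cong del: if_weak_cong)

lemma eig_lt1:
  fixes T :: "real^'n^'n"
  assumes conv: "\<And>a. (\<lambda>k. mat_pow T k *v a) \<longlonglongrightarrow> 0"
  shows "spectral_radius T < 1"
proof -
  define M where "M = (\<chi> i j. complex_of_real (T $ i $ j))"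
  have fn: "finite {z. det (mat z - M) = 0}" "{z. det (mat z - M) = 0} \<noteq> {}"
    using eig_finite_nonempty[of M] by auto
  have lt: "norm z < 1" if z: "det (mat z - M) = 0" for z
  proof (rule ccontr)
    assume nz: "\<not> norm z < 1"
    have "\<not> invertible (mat z - M)" using z invertible_det_nz by blast
    then have "\<not> (\<exists>B. B ** (mat z - M) = mat 1)" using invertible_left_inverse by blast
    then obtain x where x: "(mat z - M) *v x = 0" "x \<noteq> 0"
      using matrix_left_invertible_ker by blast
    have Mx: "M *v x = z *s x"
      using x(1) by (simp add: matrix_vector_mult_diff_rdistrib mat_z_mv)
    obtain i where xi: "x $ i \<noteq> 0" using x(2) by (auto simp: vec_eq_iff)
    define a where "a = (\<chi> j. Re (x $ j))"
    define b where "b = (\<chi> j. Im (x $ j))"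
    have key: "\<forall>j. Complex ((mat_pow T k *v a) $ j) ((mat_pow T k *v b) $ j) = z ^ k * x $ j" for k
    proof (induction k)
      case 0 then show ?case by (simp add: a_def b_def complex_eq_iff)
    next
      case (Suc k)
      define p where "p = mat_pow T k *v a"
      define q where "q = mat_pow T k *v b"
      have pq: "Complex (p $ l) (q $ l) = z ^ k * x $ l" for l using Suc unfolding p_def q_def by blast
      have s1: "mat_pow T (Suc k) *v a = T *v p" "mat_pow T (Suc k) *v b = T *v q"
        unfolding p_def q_def by (simp_all add: matrix_vector_mul_assoc)
      show ?case
      proof
        fix j
        have "Complex ((T *v p) $ j) ((T *v q) $ j) = (\<Sum>l\<in>UNIV. M $ j $ l * Complex (p $ l) (q $ l))"
          by (simp add: complex_eq_iff matrix_vector_mult_def M_def Re_sum Im_sum)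
        also have "\<dots> = z ^ k * (M *v x) $ j"
          by (simp add: pq matrix_vector_mult_def sum_distrib_left mult_ac)
        also have "\<dots> = z ^ Suc k * x $ j" by (simp add: Mx)
        finally show "Complex ((mat_pow T (Suc k) *v a) $ j) ((mat_pow T (Suc k) *v b) $ j) = z ^ Suc k * x $ j"
          unfolding s1 .
      qed
    qed
    have la: "(\<lambda>k. (mat_pow T k *v a) $ i) \<longlonglongrightarrow> 0" using tendsto_vec_nth[OF conv[of a]] by simp
    have lb: "(\<lambda>k. (mat_pow T k *v b) $ i) \<longlonglongrightarrow> 0" using tendsto_vec_nth[OF conv[of b]] by simp
    have bd: "norm (z ^ k * x $ i) \<le> \<bar>(mat_pow T k *v a) $ i\<bar> + \<bar>(mat_pow T k *v b) $ i\<bar>" for k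
    proof -
      have e: "z ^ k * x $ i = Complex ((mat_pow T k *v a) $ i) ((mat_pow T k *v b) $ i)"
        using key[of k] by simp
      show ?thesis unfolding e
        using cmod_le[of "Complex ((mat_pow T k *v a) $ i) ((mat_pow T k *v b) $ i)"] by simp
    qed
    have "(\<lambda>k. z ^ k * x $ i) \<longlonglongrightarrow> 0"
      by (rule Lim_null_comparison[OF always_eventually[OF allI[OF bd]]])
         (use tendsto_add[OF tendsto_rabs_zero[OF la] tendsto_rabs_zero[OF lb]] in simp)
    then have l: "(\<lambda>k. norm (z ^ k * x $ i)) \<longlonglongrightarrow> 0" using tendsto_norm_zero by blast
    have "norm (x $ i) \<le> norm (z ^ k * x $ i)" for k
    proof -
      have "1 \<le> norm z ^ k" using nz by (simp add: one_le_power)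
      then show ?thesis by (simp add: norm_mult norm_power mult_le_cancel_right1)
    qed
    then have "norm (x $ i) \<le> 0" by (intro LIMSEQ_le_const[OF l]) auto
    then show False using xi by simp
  qed
  have "Max {norm z |z. det (mat z - M) = 0} < 1"
    using fn lt by (subst Max_less_iff) auto
  then show ?thesis unfolding spectral_radius_def M_def .
qed


lemma rho_lt1:
  fixes K :: "(real^'n) set" and A U V F G :: "real^'n^'n"
  assumes PK: "proper_cone K" and Ainv: "invertible A" and Ai0: "K_nonneg K (matrix_inv A)"
    and AUV: "A = U - V" and V0: "K_nonneg K V" and UFG: "U = F - G" and Finv: "invertible F"
    and Fi0: "K_nonneg K (matrix_inv F)" and H0: "K_nonneg K (matrix_inv F ** G)" and s: "s \<ge> 1"
  shows "spectral_radius (mat_pow (matrix_inv F ** G) s +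
     (\<Sum>j<s. mat_pow (matrix_inv F ** G) j ** matrix_inv F ** V)) < 1"
proof -
  define Fi where "Fi = matrix_inv F"
  define H where "H = Fi ** G"
  define T where "T = mat_pow H s + (\<Sum>j<s. mat_pow H j ** Fi ** V)"
  define B where "B = (\<Sum>j<s. mat_pow H j ** Fi)"
  define Ai where "Ai = matrix_inv A"
  have FiF: "Fi ** F = mat 1" using minv(2)[OF Finv] Fi_def by simp
  have AAi: "A ** Ai = mat 1" using minv(1)[OF Ainv] Ai_def by simp
  have G: "G = F - U" using UFG by simp
  have Hx: "H *v x = x - Fi *v (U *v x)" for x
  proof -
    have "H *v x = Fi *v (F *v x) - Fi *v (U *v x)" unfolding H_def G
      by (simp add: matrix_vector_mul_assoc[symmetric] matrix_vector_mult_diff_rdistrib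
          matrix_vector_mult_diff_distrib)
    also have "Fi *v (F *v x) = x" by (simp add: matrix_vector_mul_assoc FiF)
    finally show ?thesis .
  qed
  have Tx: "T *v x = mat_pow H s *v x + (\<Sum>j<s. mat_pow H j *v (Fi *v (V *v x)))" for x
    unfolding T_def by (simp add: matrix_vector_mult_add_rdistrib sum_mv matrix_vector_mul_assoc matrix_mul_assoc)
  have Bx: "B *v x = (\<Sum>j<s. mat_pow H j *v (Fi *v x))" for x
    unfolding B_def by (simp add: sum_mv matrix_vector_mul_assoc)
  have tele: "(\<Sum>j<s. mat_pow H j *v (Fi *v (U *v x))) = x - mat_pow H s *v x" for x
  proof -
    have "(\<Sum>j<s. mat_pow H j *v (Fi *v (U *v x))) = (\<Sum>j<s. mat_pow H j *v x - mat_pow H (Suc j) *v x)"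
    proof (rule sum.cong[OF refl])
      fix j
      have "Fi *v (U *v x) = x - H *v x" using Hx[of x] by simp
      then show "mat_pow H j *v (Fi *v (U *v x)) = mat_pow H j *v x - mat_pow H (Suc j) *v x"
        by (simp del: mat_pow.simps(2) add: mat_pow_mv_Suc matrix_vector_mult_diff_distrib)
    qed
    also have "\<dots> = x - mat_pow H s *v x" by (subst sum_lessThan_telescope') simp
    finally show ?thesis .
  qed
  have TB: "T *v x = x - B *v (A *v x)" for x
  proof -
    have "B *v (A *v x) = (\<Sum>j<s. mat_pow H j *v (Fi *v (U *v x)) - mat_pow H j *v (Fi *v (V *v x)))"
      unfolding Bx AUV by (simp add: matrix_vector_mult_diff_rdistrib matrix_vector_mult_diff_distrib)
    also have "\<dots> = x - mat_pow H s *v x - (\<Sum>j<s. mat_pow H j *v (Fi *v (V *v x)))"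
      by (simp add: sum_subtractf tele)
    finally show ?thesis unfolding Tx by simp
  qed
  have HK: "K_nonneg K H" using H0 unfolding H_def Fi_def .
  have FiK: "K_nonneg K Fi" using Fi0 unfolding Fi_def .
  have TK: "K_nonneg K T" unfolding K_nonneg_def
  proof
    fix x assume x: "x \<in> K"
    show "T *v x \<in> K" unfolding Tx
      by (intro K_add[OF PK] K_sum[OF PK] Kn_ap[OF PK] Kn_pow[OF PK] HK FiK V0 x)
  qed
  obtain c e where ce: "e > 0" "ball c e \<subseteq> K" using K_ball[OF PK] by blast
  have cK: "c \<in> K" using ce by auto
  define z where "z = Fi *v c"
  have zK: "z \<in> K" unfolding z_def using Kn_ap[OF PK FiK cK] .
  have zabs: "\<exists>r. r *\<^sub>R z + y \<in> K \<and> r *\<^sub>R z - y \<in> K" for y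
  proof -
    obtain t where t: "t > 0" "c + t *\<^sub>R (F *v y) \<in> K" "c - t *\<^sub>R (F *v y) \<in> K"
      using absorb[OF PK ce] by blast
    have FiFy: "Fi *v (F *v y) = y" by (simp add: matrix_vector_mul_assoc FiF)
    have "Fi *v (c + t *\<^sub>R (F *v y)) \<in> K" "Fi *v (c - t *\<^sub>R (F *v y)) \<in> K"
      using Kn_ap[OF PK FiK] t by auto
    then have "z + t *\<^sub>R y \<in> K" "z - t *\<^sub>R y \<in> K"
      unfolding z_def by (simp_all add: matrix_vector_right_distrib matrix_vector_mult_diff_distrib
          matrix_vector_mult_scaleR FiFy)
    then have "(1/t) *\<^sub>R (z + t *\<^sub>R y) \<in> K" "(1/t) *\<^sub>R (z - t *\<^sub>R y) \<in> K"
      using K_scale[OF PK] t(1) by auto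
    then show ?thesis using t(1) by (intro exI[of _ "1/t"]) (simp add: algebra_simps)
  qed
  define w where "w = Ai *v c"
  have Bc: "B *v c = w - T *v w"
    using TB[of w] by (simp add: w_def matrix_vector_mul_assoc AAi)
  have sumB: "(\<Sum>k<m. mat_pow T k *v (B *v c)) = w - mat_pow T m *v w" for m
  proof -
    have "(\<Sum>k<m. mat_pow T k *v (B *v c)) = (\<Sum>k<m. mat_pow T k *v w - mat_pow T (Suc k) *v w)"
      unfolding Bc by (simp del: mat_pow.simps(2) add: mat_pow_mv_Suc matrix_vector_mult_diff_distrib)
    also have "\<dots> = w - mat_pow T m *v w" by (subst sum_lessThan_telescope') simp
    finally show ?thesis .
  qed
  have BczK: "B *v c - z \<in> K"
  proof -
    have "B *v c = mat_pow H 0 *v (Fi *v c) + (\<Sum>j\<in>{..<s} - {0}. mat_pow H j *v (Fi *v c))"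
      unfolding Bx using s by (subst sum.remove[of _ 0]) auto
    then have "B *v c - z = (\<Sum>j\<in>{..<s} - {0}. mat_pow H j *v (Fi *v c))"
      unfolding z_def by simp
    also have "\<dots> \<in> K"
      by (intro K_sum[OF PK] Kn_ap[OF PK] Kn_pow[OF PK] HK FiK cK)
    finally show ?thesis .
  qed
  have wb: "w - (\<Sum>k<m. mat_pow T k *v z) \<in> K" for m
  proof -
    have "w - (\<Sum>k<m. mat_pow T k *v z) = mat_pow T m *v w + (\<Sum>k<m. mat_pow T k *v (B *v c) - mat_pow T k *v z)"
      by (simp add: sum_subtractf sumB)
    also have "\<dots> = mat_pow T m *v w + (\<Sum>k<m. mat_pow T k *v (B *v c - z))"
      by (simp add: matrix_vector_mult_diff_distrib)
    also have "\<dots> \<in> K"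
      by (intro K_add[OF PK] K_sum[OF PK] Kn_ap[OF PK] Kn_pow[OF PK] TK BczK)
         (simp add: w_def Kn_ap[OF PK Ai0[folded Ai_def] cK])
    finally show ?thesis .
  qed
  have "spectral_radius T < 1"
    by (rule eig_lt1) (rule conv_zero[OF PK TK zabs zK wb])
  then show ?thesis unfolding T_def H_def Fi_def .
qed


theorem theorem3p12:
  fixes K :: "(real ^ 'n) set"
    and A U V F G Fb Gb :: "real ^ 'n ^ 'n"
    and s :: nat
  assumes "proper_cone K"
    and "K_monotone K A"
    and "K_regular_splitting K A U V"
    and "K_weak_regular_I K U F G"
    and "K_weak_regular_II K U Fb Gb"
    and "V ** matrix_inv Fb ** Gb = Gb ** matrix_inv Fb ** V"
    and "s \<ge> 1"
    and "K_ge K (matrix_inv F) (matrix_inv Fb)"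
    and "K_ge K (matrix_inv F ** G) (matrix_inv Fb ** Gb)"
  shows "spectral_radius
           (mat_pow (matrix_inv F ** G) s +
            (\<Sum>j<s. mat_pow (matrix_inv F ** G) j ** matrix_inv F ** V))
         \<le> spectral_radius
           (mat_pow (matrix_inv Fb ** Gb) s +
            (\<Sum>j<s. mat_pow (matrix_inv Fb ** Gb) j ** matrix_inv Fb ** V))
       \<and> spectral_radius
           (mat_pow (matrix_inv Fb ** Gb) s +
            (\<Sum>j<s. mat_pow (matrix_inv Fb ** Gb) j ** matrix_inv Fb ** V)) < 1"
proof -
  define Fi where "Fi = matrix_inv F"
  define Fbi where "Fbi = matrix_inv Fb"
  have PK: "proper_cone K" using assms(1) .
  from assms(3) have AUV: "A = U - V" and Uinv: "invertible U"
    and Ui0: "K_nonneg K (matrix_inv U)" and V0: "K_nonneg K V"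
    unfolding K_regular_splitting_def by auto
  from assms(4) have UFG: "U = F - G" and Finv: "invertible F"
    and Fi0: "K_nonneg K (matrix_inv F)" and H0: "K_nonneg K (matrix_inv F ** G)"
    unfolding K_weak_regular_I_def by auto
  from assms(5) have UFGb: "U = Fb - Gb" and Fbinv: "invertible Fb"
    unfolding K_weak_regular_II_def by auto
  from assms(2) have Ainv: "invertible A" and Ai0: "K_nonneg K (matrix_inv A)"
    unfolding K_monotone_def by auto
  have FiF: "Fi ** F = mat 1" using minv(2)[OF Finv] Fi_def by simp
  have FbiFb: "Fbi ** Fb = mat 1" using minv(2)[OF Fbinv] Fbi_def by simp
  have Hx: "(Fi ** G) *v x = x - Fi *v (U *v x)" for x
  proof -
    have G: "G = F - U" using UFG by simp
    have "(Fi ** G) *v x = Fi *v (F *v x) - Fi *v (U *v x)" unfolding G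
      by (simp add: matrix_vector_mul_assoc[symmetric] matrix_vector_mult_diff_rdistrib
          matrix_vector_mult_diff_distrib)
    also have "Fi *v (F *v x) = x" by (simp add: matrix_vector_mul_assoc FiF)
    finally show ?thesis .
  qed
  have Hbx: "(Fbi ** Gb) *v x = x - Fbi *v (U *v x)" for x
  proof -
    have G: "Gb = Fb - U" using UFGb by simp
    have "(Fbi ** Gb) *v x = Fbi *v (Fb *v x) - Fbi *v (U *v x)" unfolding G
      by (simp add: matrix_vector_mul_assoc[symmetric] matrix_vector_mult_diff_rdistrib
          matrix_vector_mult_diff_distrib)
    also have "Fbi *v (Fb *v x) = x" by (simp add: matrix_vector_mul_assoc FbiFb)
    finally show ?thesis .
  qed
  have UUi: "U *v (matrix_inv U *v x) = x" for x
    by (simp add: matrix_vector_mul_assoc minv(1)[OF Uinv])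
  have D1: "Fi *v x - Fbi *v x \<in> K" if "x \<in> K" for x
    using assms(8) that unfolding K_ge_def K_nonneg_def Fi_def Fbi_def
    by (simp add: matrix_vector_mult_diff_rdistrib)
  have D2: "Fbi *v x - Fi *v x \<in> K" if x: "x \<in> K" for x
  proof -
    define y where "y = matrix_inv U *v x"
    have yK: "y \<in> K" unfolding y_def using Kn_ap[OF PK Ui0 x] .
    have "(Fi ** G - Fbi ** Gb) *v y \<in> K"
      using assms(9) yK unfolding K_ge_def K_nonneg_def Fi_def Fbi_def by simp
    then show ?thesis
      by (simp add: matrix_vector_mult_diff_rdistrib Hx Hbx y_def UUi)
  qed
  have D0: "Fi *v x - Fbi *v x = 0" if x: "x \<in> K" for x
    using K_pointed[OF PK D1[OF x]] D2[OF x] by simp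
  have Fy: "Fi *v y = Fbi *v y" for y
  proof -
    obtain c e where ce: "e > 0" "ball c e \<subseteq> K" using K_ball[OF PK] by blast
    obtain t where t: "t > 0" "c + t *\<^sub>R y \<in> K" "c - t *\<^sub>R y \<in> K"
      using absorb[OF PK ce] by blast
    have cK: "c \<in> K" using ce by auto
    have "0 = Fi *v (c + t *\<^sub>R y) - Fbi *v (c + t *\<^sub>R y)" using D0[OF t(2)] by simp
    also have "\<dots> = (Fi *v c - Fbi *v c) + t *\<^sub>R (Fi *v y - Fbi *v y)"
      by (simp add: matrix_vector_right_distrib matrix_vector_mult_scaleR algebra_simps)
    also have "\<dots> = t *\<^sub>R (Fi *v y - Fbi *v y)" using D0[OF cK] by simp
    finally show ?thesis using t(1) by simp
  qed
  have FiE: "matrix_inv Fb = matrix_inv F"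
    using Fy unfolding Fi_def Fbi_def by (simp add: matrix_eq)
  have HE: "matrix_inv Fb ** Gb = matrix_inv F ** G"
    unfolding matrix_eq using Hx Hbx Fy unfolding Fi_def Fbi_def by simp
  have lt: "spectral_radius (mat_pow (matrix_inv F ** G) s +
     (\<Sum>j<s. mat_pow (matrix_inv F ** G) j ** matrix_inv F ** V)) < 1"
    by (rule rho_lt1[OF PK Ainv Ai0 AUV V0 UFG Finv Fi0 H0 assms(7)])
  show ?thesis unfolding HE unfolding FiE using lt by simp
qed

end
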